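(* Let $\ell^1$ be the Banach space of complex sequences $a=(a(n))_{n\ge1}$ with $\|a\|=\sum_n|a(n)|<\infty$, equipped with the product $(a*b)(1)=a(1)b(1)$ and $(a*b)(n)=a(1)b(n)+b(1)a(n)+a(n)b(n)$ for $n>1$. Its character space is $\{\phi_1\}\cup\{\phi_1+\phi_n:n>1\}$ where $\phi_n(a)=a(n)$. Then $\ell^1$ is neither left $\phi_1$-amenable nor $\phi_1$-biflat, but $\ell^1$ is approximately left character biprojective.
   Context: For a Banach algebra $A$ and character $\phi$: $A$ is left $\phi$-amenable if there is a bounded net $(a_\alpha)$ in $A$ with $\|aa_\alpha-\phi(a)a_\alpha\|\to0$ for all $a$ and $\phi(a_\alpha)\to1$. $A\otimes_pA$ is the projective tensor product with $a\cdot(b\otimes c)=ab\otimes c$, $(b\otimes c)\cdot a=b\otimes ca$, $\pi_A(a\otimes b)=ab$; $\tilde\phi(F)=F(\phi)$ for $F\in A^{**}$. $A$ is $\phi$-biflat if there is a bounded $A$-bimodule morphism $\rho:A\to(A\otimes_pA)^{**}$ with $\tilde\phi(\pi_A^{**}(\rho(a)))=\phi(a)$ for all $a$. $A$ is approximately left $\phi$-biprojective if there is a net $(\rho_\alpha)$ of bounded linear maps $A\to A\otimes_pA$ such that for all $a,x\in A$: $\|a\cdot\rho_\alpha(x)-\rho_\alpha(ax)\|\to0$, $\|\rho_\alpha(xa)-\phi(a)\rho_\alpha(x)\|\to0$, $\phi(\pi_A(\rho_\alpha(x)))-\phi(x)\to0$; approximately left character biprojective means this holds for every character. *)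

theory Defs
  imports "HOL-Analysis.Analysis"
begin

type_synonym seq = "nat \<Rightarrow> complex"
type_synonym seq2 = "nat \<times> nat \<Rightarrow> complex"

text \<open>Elements of ell^1 are sequences indexed by n >= 1; we use functions on nat
  whose value at 0 is 0 (index 0 is unused).\<close>
definition L1 :: "seq set" where
  "L1 = {a. a 0 = 0 \<and> summable (\<lambda>n. cmod (a n))}"

definition l1norm :: "seq \<Rightarrow> real" where
  "l1norm a = (\<Sum>n. cmod (a n))"

definition l1add :: "seq \<Rightarrow> seq \<Rightarrow> seq" where
  "l1add a b = (\<lambda>n. a n + b n)"

definition l1scale :: "complex \<Rightarrow> seq \<Rightarrow> seq" where
  "l1scale c a = (\<lambda>n. c * a n)"

definition l1mult :: "seq \<Rightarrow> seq \<Rightarrow> seq" where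
  "l1mult a b = (\<lambda>n. if n = 0 then 0
                       else if n = 1 then a 1 * b 1
                       else a 1 * b n + b 1 * a n + a n * b n)"

definition unitvec :: "nat \<Rightarrow> seq" where
  "unitvec i = (\<lambda>n. if n = i then 1 else 0)"

definition is_character :: "(seq \<Rightarrow> complex) \<Rightarrow> bool" where
  "is_character \<phi> \<longleftrightarrow>
     (\<forall>a\<in>L1. \<forall>b\<in>L1. \<forall>c. \<phi> (l1add a (l1scale c b)) = \<phi> a + c * \<phi> b) \<and>
     (\<forall>a\<in>L1. \<forall>b\<in>L1. \<phi> (l1mult a b) = \<phi> a * \<phi> b) \<and>
     (\<exists>C. \<forall>a\<in>L1. cmod (\<phi> a) \<le> C * l1norm a) \<and>
     (\<exists>a\<in>L1. \<phi> a \<noteq> 0)"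

definition phi1 :: "seq \<Rightarrow> complex" where
  "phi1 a = a 1"

section \<open>The projective tensor product ell^1 (x)_p ell^1 = ell^1(N x N)\<close>

definition L1T :: "seq2 set" where
  "L1T = {u. (\<forall>i j. (i = 0 \<or> j = 0) \<longrightarrow> u (i, j) = 0) \<and> (\<lambda>p. cmod (u p)) summable_on UNIV}"

definition tnorm :: "seq2 \<Rightarrow> real" where
  "tnorm u = infsum (\<lambda>p. cmod (u p)) UNIV"

definition tadd :: "seq2 \<Rightarrow> seq2 \<Rightarrow> seq2" where
  "tadd u v = (\<lambda>p. u p + v p)"

definition tscale :: "complex \<Rightarrow> seq2 \<Rightarrow> seq2" where
  "tscale c u = (\<lambda>p. c * u p)"

definition elem_tensor :: "seq \<Rightarrow> seq \<Rightarrow> seq2" where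
  "elem_tensor a b = (\<lambda>(i, j). a i * b j)"

text \<open>Module actions a.(b (x) c) = ab (x) c and (b (x) c).a = b (x) ca, extended continuously.\<close>
definition lmod :: "seq \<Rightarrow> seq2 \<Rightarrow> seq2" where
  "lmod a u = (\<lambda>(i, j). l1mult a (\<lambda>k. u (k, j)) i)"

definition rmod :: "seq2 \<Rightarrow> seq \<Rightarrow> seq2" where
  "rmod u a = (\<lambda>(i, j). l1mult (\<lambda>k. u (i, k)) a j)"

text \<open>The product map pi(a (x) b) = ab, extended continuously.\<close>
definition piA :: "seq2 \<Rightarrow> seq" where
  "piA u = (\<lambda>n. infsum (\<lambda>(i, j). u (i, j) * l1mult (unitvec i) (unitvec j) n) UNIV)"

definition dualT :: "(seq2 \<Rightarrow> complex) set" where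
  "dualT = {f. (\<forall>u\<in>L1T. \<forall>v\<in>L1T. \<forall>c. f (tadd u (tscale c v)) = f u + c * f v) \<and>
               (\<exists>C. \<forall>u\<in>L1T. cmod (f u) \<le> C * tnorm u)}"

definition dnorm :: "(seq2 \<Rightarrow> complex) \<Rightarrow> real" where
  "dnorm f = Sup {cmod (f u) | u. u \<in> L1T \<and> tnorm u \<le> 1}"

definition dadd :: "(seq2 \<Rightarrow> complex) \<Rightarrow> (seq2 \<Rightarrow> complex) \<Rightarrow> (seq2 \<Rightarrow> complex)" where
  "dadd f g = (\<lambda>u. f u + g u)"

definition dscale :: "complex \<Rightarrow> (seq2 \<Rightarrow> complex) \<Rightarrow> (seq2 \<Rightarrow> complex)" where
  "dscale c f = (\<lambda>u. c * f u)"

definition bidualT :: "((seq2 \<Rightarrow> complex) \<Rightarrow> complex) set" where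
  "bidualT = {F. (\<forall>f\<in>dualT. \<forall>g\<in>dualT. \<forall>c. F (dadd f (dscale c g)) = F f + c * F g) \<and>
                 (\<exists>C. \<forall>f\<in>dualT. cmod (F f) \<le> C * dnorm f)}"

section \<open>Amenability-type notions (nets are represented by proper filters)\<close>

definition left_phi_amenable :: "(seq \<Rightarrow> complex) \<Rightarrow> bool" where
  "left_phi_amenable \<phi> \<longleftrightarrow>
     (\<exists>F :: seq filter. F \<noteq> bot \<and>
        (\<exists>C. eventually (\<lambda>x. x \<in> L1 \<and> l1norm x \<le> C) F) \<and>
        (\<forall>a\<in>L1. ((\<lambda>x. l1norm (\<lambda>n. l1mult a x n - \<phi> a * x n)) \<longlongrightarrow> 0) F) \<and>
        ((\<lambda>x. \<phi> x) \<longlongrightarrow> 1) F)"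

text \<open>phi-biflat: bounded bimodule morphism rho : A -> (A (x)_p A)** with
  phi~(pi**(rho a)) = phi a. Bidual module actions: (a.F)(f) = F(f.a), (f.a)(u) = f(a.u);
  (F.a)(f) = F(a.f), (a.f)(u) = f(u.a). pi**(F)(g) = F(g o pi), phi~(G) = G(phi).\<close>
definition phi_biflat :: "(seq \<Rightarrow> complex) \<Rightarrow> bool" where
  "phi_biflat \<phi> \<longleftrightarrow>
     (\<exists>\<rho> :: seq \<Rightarrow> (seq2 \<Rightarrow> complex) \<Rightarrow> complex.
        (\<forall>a\<in>L1. \<rho> a \<in> bidualT) \<and>
        (\<forall>a\<in>L1. \<forall>b\<in>L1. \<forall>c. \<forall>f\<in>dualT. \<rho> (l1add a (l1scale c b)) f = \<rho> a f + c * \<rho> b f) \<and>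
        (\<exists>C. \<forall>a\<in>L1. \<forall>f\<in>dualT. cmod (\<rho> a f) \<le> C * l1norm a * dnorm f) \<and>
        (\<forall>a\<in>L1. \<forall>b\<in>L1. \<forall>f\<in>dualT. \<rho> (l1mult a b) f = \<rho> b (\<lambda>u. f (lmod a u))) \<and>
        (\<forall>a\<in>L1. \<forall>b\<in>L1. \<forall>f\<in>dualT. \<rho> (l1mult a b) f = \<rho> a (\<lambda>u. f (rmod u b))) \<and>
        (\<forall>a\<in>L1. \<rho> a (\<lambda>u. \<phi> (piA u)) = \<phi> a))"

definition bounded_linear_to_T :: "(seq \<Rightarrow> seq2) \<Rightarrow> bool" where
  "bounded_linear_to_T r \<longleftrightarrow>
     (\<forall>a\<in>L1. r a \<in> L1T) \<and>
     (\<forall>a\<in>L1. \<forall>b\<in>L1. \<forall>c. r (l1add a (l1scale c b)) = tadd (r a) (tscale c (r b))) \<and>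
     (\<exists>C. \<forall>a\<in>L1. tnorm (r a) \<le> C * l1norm a)"

definition approx_left_phi_biprojective :: "(seq \<Rightarrow> complex) \<Rightarrow> bool" where
  "approx_left_phi_biprojective \<phi> \<longleftrightarrow>
     (\<exists>F :: (seq \<Rightarrow> seq2) filter. F \<noteq> bot \<and>
        eventually bounded_linear_to_T F \<and>
        (\<forall>a\<in>L1. \<forall>x\<in>L1.
           ((\<lambda>r. tnorm (\<lambda>p. lmod a (r x) p - r (l1mult a x) p)) \<longlongrightarrow> 0) F \<and>
           ((\<lambda>r. tnorm (\<lambda>p. r (l1mult x a) p - \<phi> a * r x p)) \<longlongrightarrow> 0) F \<and>
           ((\<lambda>r. \<phi> (piA (r x)) - \<phi> x) \<longlongrightarrow> 0) F))"

definition approx_left_character_biprojective :: bool where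
  "approx_left_character_biprojective \<longleftrightarrow>
     (\<forall>\<phi>. is_character \<phi> \<longrightarrow> approx_left_phi_biprojective \<phi>)"

end

theory Submission
  imports Defs
begin


lemma tail_tendsto:
  fixes f :: "nat \<Rightarrow> real"
  assumes "summable f"
  shows "(\<lambda>N. \<Sum>i. if N \<le> i then f i else 0) \<longlonglongrightarrow> 0"
proof -
  have eq: "(\<Sum>i. if N \<le> i then f i else 0) = suminf f - sum f {..<N}" for N
  proof -
    have s2: "summable (\<lambda>i. if i < N then f i else 0)"
      by (rule summable_finite[of "{..<N}"]) auto
    have "suminf (\<lambda>i. if i < N then f i else 0) = sum f {..<N}"
      by (subst suminf_finite[of "{..<N}"]) auto
    moreover have "suminf f - suminf (\<lambda>i. if i < N then f i else 0) = (\<Sum>i. if N \<le> i then f i else 0)"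
      by (subst suminf_diff[OF assms s2]) (auto intro!: suminf_cong)
    ultimately show ?thesis by simp
  qed
  have "(\<lambda>N. suminf f - sum f {..<N}) \<longlonglongrightarrow> suminf f - suminf f"
    by (intro tendsto_diff tendsto_const summable_LIMSEQ assms)
  then show ?thesis by (simp add: eq)
qed

lemma infsum_nat_nonneg:
  fixes f :: "nat \<Rightarrow> real"
  assumes "summable f" "\<And>n. f n \<ge> 0"
  shows "infsum f UNIV = suminf f"
proof -
  have "summable (\<lambda>n. norm (f n))" using assms by simp
  then have "(f has_sum suminf f) UNIV"
    using norm_summable_imp_has_sum[of f "suminf f"] summable_sums[OF assms(1)] by blast
  then show ?thesis by (rule infsumI)
qed

lemma coord_le_l1norm:
  assumes "a \<in> L1" shows "cmod (a n) \<le> l1norm a"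
proof -
  have "sum (\<lambda>n. cmod (a n)) {n} \<le> (\<Sum>n. cmod (a n))"
    using assms by (intro sum_le_suminf) (auto simp: L1_def)
  then show ?thesis by (simp add: l1norm_def)
qed

lemma l1norm_nonneg: "a \<in> L1 \<Longrightarrow> l1norm a \<ge> 0"
  by (simp add: l1norm_def L1_def suminf_nonneg)

lemma L1_lin: assumes "a \<in> L1" "b \<in> L1" shows "l1add a (l1scale c b) \<in> L1"
proof -
  have S: "summable (\<lambda>n. cmod (a n) + cmod c * cmod (b n))"
    using assms unfolding L1_def by (intro summable_add summable_mult) auto
  have B: "norm (cmod (a n + c * b n)) \<le> cmod (a n) + cmod c * cmod (b n)" for n
    using norm_triangle_ineq[of "a n" "c * b n"] by (simp add: norm_mult)
  have "summable (\<lambda>n. cmod (a n + c * b n))"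
    by (rule summable_comparison_test'[OF S B])
  then show ?thesis using assms by (simp add: L1_def l1add_def l1scale_def)
qed

lemma L1_mult: assumes "a \<in> L1" "b \<in> L1" shows "l1mult a b \<in> L1"
proof -
  let ?g = "\<lambda>n. cmod (a 1) * cmod (b n) + cmod (b 1) * cmod (a n) + l1norm b * cmod (a n)"
  have S: "summable ?g"
    using assms unfolding L1_def by (intro summable_add summable_mult) auto
  have B: "cmod (l1mult a b n) \<le> ?g n" for n
  proof -
    have nn: "0 \<le> l1norm b" using l1norm_nonneg[OF assms(2)] .
    have g0: "0 \<le> ?g n" using nn by simp
    have c1: "cmod (a n * b n) \<le> l1norm b * cmod (a n)"
      using coord_le_l1norm[OF assms(2), of n] 
      by (simp add: norm_mult) (metis mult.commute mult_left_mono norm_ge_zero)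
    have c2: "cmod (a 1 * b n + b 1 * a n + a n * b n) \<le> cmod (a 1 * b n) + cmod (b 1 * a n) + cmod (a n * b n)"
      by (meson norm_triangle_ineq order_trans add_right_mono)
    show ?thesis
    proof (cases "n = 0")
      case True then show ?thesis using g0 by (simp add: l1mult_def)
    next
      case False
      show ?thesis
      proof (cases "n = 1")
        case True
        have "0 \<le> l1norm b * cmod (a 1)" using nn by simp
        moreover have "0 \<le> cmod (b 1) * cmod (a 1)" by simp
        ultimately show ?thesis using True by (simp add: l1mult_def norm_mult)
      next
        case False
        then have "l1mult a b n = a 1 * b n + b 1 * a n + a n * b n"
          using \<open>n \<noteq> 0\<close> by (simp add: l1mult_def)
        then show ?thesis using c1 c2 by (simp add: norm_mult)
      qed
    qed
  qed
  have "summable (\<lambda>n. cmod (l1mult a b n))"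
    by (rule summable_comparison_test'[OF S]) (use B in simp)
  then show ?thesis by (simp add: L1_def l1mult_def)
qed

lemma unitvec_L1: "k \<noteq> 0 \<Longrightarrow> unitvec k \<in> L1"
  unfolding L1_def unitvec_def by (auto intro!: summable_finite[of "{k}"] split: if_splits)

lemma zero_L1: "(\<lambda>_. 0) \<in> L1"
  by (simp add: L1_def)

lemma l1norm_single: "l1norm (\<lambda>n. if n = k then c else 0) = cmod c"
proof -
  have "(\<Sum>n. cmod (if n = k then c else 0)) = (\<Sum>n\<in>{k}. cmod (if n = k then c else 0))"
    by (rule suminf_finite) auto
  then show ?thesis by (simp add: l1norm_def)
qed

lemma unit_left: "a 0 = 0 \<Longrightarrow> l1mult (unitvec 1) a = a"
  by (rule ext) (simp add: l1mult_def unitvec_def)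

lemma unit_right: "a 0 = 0 \<Longrightarrow> l1mult a (unitvec 1) = a"
  by (rule ext) (simp add: l1mult_def unitvec_def)



lemma tl_L1: assumes "a \<in> L1" shows "(\<lambda>i. if N \<le> i then a i else 0) \<in> L1"
proof -
  have S: "summable (\<lambda>i. cmod (a i))" using assms by (simp add: L1_def)
  have B: "norm (cmod (if N \<le> i then a i else 0)) \<le> cmod (a i)" for i by simp
  have "summable (\<lambda>i. cmod (if N \<le> i then a i else 0))"
    by (rule summable_comparison_test'[OF S B])
  then show ?thesis using assms by (simp add: L1_def)
qed

lemma tl_norm_tendsto: assumes "a \<in> L1"
  shows "(\<lambda>N. l1norm (\<lambda>i. if N \<le> i then a i else 0)) \<longlonglongrightarrow> 0"
proof -
  have S: "summable (\<lambda>i. cmod (a i))" using assms by (simp add: L1_def)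
  have "l1norm (\<lambda>i. if N \<le> i then a i else 0) = (\<Sum>i. if N \<le> i then cmod (a i) else 0)" for N
    unfolding l1norm_def by (rule suminf_cong) simp
  then show ?thesis using tail_tendsto[OF S] by simp
qed

lemma char_forms:
  assumes "is_character \<phi>"
  shows "(\<forall>a\<in>L1. \<phi> a = phi1 a) \<or> (\<exists>n>1. \<forall>a\<in>L1. \<phi> a = phi1 a + a n)"
proof -
  from assms obtain C where lin: "\<forall>a\<in>L1. \<forall>b\<in>L1. \<forall>c. \<phi> (l1add a (l1scale c b)) = \<phi> a + c * \<phi> b"
    and mul: "\<forall>a\<in>L1. \<forall>b\<in>L1. \<phi> (l1mult a b) = \<phi> a * \<phi> b"
    and bnd: "\<forall>a\<in>L1. cmod (\<phi> a) \<le> C * l1norm a" and nz: "\<exists>a\<in>L1. \<phi> a \<noteq> 0"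
    unfolding is_character_def by blast
  define c where "c k = \<phi> (unitvec k)" for k
  define tl where "tl N a = (\<lambda>i. if N \<le> i then a i else 0)" for N and a :: seq
  have step1: "\<phi> (tl N a) = \<phi> (tl (Suc N) a) + a N * c N" if "a \<in> L1" "N \<ge> 1" for a N
  proof -
    have "tl N a = l1add (tl (Suc N) a) (l1scale (a N) (unitvec N))"
    proof (rule ext)
      fix i show "tl N a i = l1add (tl (Suc N) a) (l1scale (a N) (unitvec N)) i"
        by (cases "i < N"; cases "i = N") (auto simp: tl_def l1add_def l1scale_def unitvec_def)
    qed
    moreover have "tl (Suc N) a \<in> L1" using tl_L1[OF that(1)] by (simp add: tl_def)
    moreover have "unitvec N \<in> L1" using that(2) by (intro unitvec_L1) simp
    ultimately show ?thesis using lin by (simp add: c_def)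
  qed
  have decomp: "\<phi> a = (\<Sum>k\<in>{1..<N}. a k * c k) + \<phi> (tl N a)" if "a \<in> L1" "N \<ge> 1" for a N
    using that(2)
  proof (induction N rule: dec_induct)
    case base
    have "tl 1 a = a" using that(1) by (auto simp: tl_def L1_def fun_eq_iff not_less_eq_eq)
    then show ?case by simp
  next
    case (step N)
    then show ?case using step1[OF that(1), of N] by simp
  qed
  have lim: "\<phi> a = L" if "a \<in> L1" "\<And>N. N \<ge> N0 \<Longrightarrow> \<phi> a - L = \<phi> (tl N a)" for a L N0
  proof -
    have T: "(\<lambda>N. C * l1norm (tl N a)) \<longlonglongrightarrow> C * 0"
      by (intro tendsto_mult tendsto_const) (use tl_norm_tendsto[OF that(1)] in \<open>simp add: tl_def\<close>)
    have E: "eventually (\<lambda>N. cmod (\<phi> a - L) \<le> C * l1norm (tl N a)) sequentially"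
      unfolding eventually_sequentially
    proof (intro exI allI impI)
      fix N assume "N \<ge> N0"
      then have "\<phi> a - L = \<phi> (tl N a)" by (rule that(2))
      moreover have "tl N a \<in> L1" using tl_L1[OF that(1)] by (simp add: tl_def)
      ultimately show "cmod (\<phi> a - L) \<le> C * l1norm (tl N a)" using bnd by simp
    qed
    have "cmod (\<phi> a - L) \<le> C * 0"
      by (rule tendsto_le[OF sequentially_bot T tendsto_const E])
    then show ?thesis by simp
  qed
  have c1: "c 1 = 1"
  proof -
    obtain a where a: "a \<in> L1" "\<phi> a \<noteq> 0" using nz by blast
    have "l1mult (unitvec 1) a = a" using a(1) by (intro unit_left) (simp add: L1_def)
    then have "\<phi> a = c 1 * \<phi> a" using mul a(1) unitvec_L1[of 1] by (metis c_def one_neq_zero)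
    then show ?thesis using a(2) by simp
  qed
  have ck: "c k = 0 \<or> c k = 1" if "k \<ge> 2" for k
  proof -
    have "l1mult (unitvec k) (unitvec k) = unitvec k"
      using that by (auto simp: l1mult_def unitvec_def fun_eq_iff)
    then have "c k = c k * c k" using mul unitvec_L1[of k] that by (metis c_def not_numeral_le_zero)
    then show ?thesis by (metis mult_cancel_right1 mult_eq_0_iff)
  qed
  have ckm: "c k * c m = 0" if "k \<ge> 2" "m \<ge> 2" "k \<noteq> m" for k m
  proof -
    have "l1mult (unitvec k) (unitvec m) = (\<lambda>_. 0)"
      using that by (auto simp: l1mult_def unitvec_def fun_eq_iff)
    moreover have "\<phi> (\<lambda>_. 0) = 0"
    proof -
      have "l1add (\<lambda>_. 0) (l1scale 1 (\<lambda>_. 0)) = (\<lambda>_. 0 :: complex)"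
        by (simp add: l1add_def l1scale_def)
      then show ?thesis using lin zero_L1 by (metis add_cancel_left_right mult_1)
    qed
    moreover have "unitvec k \<in> L1" "unitvec m \<in> L1" using that by (auto intro: unitvec_L1)
    ultimately show ?thesis using mul by (metis c_def)
  qed
  show ?thesis
  proof (cases "\<exists>n\<ge>2. c n \<noteq> 0")
    case True
    then obtain n where n: "n \<ge> 2" "c n = 1" using ck by blast
    have oth: "c k = 0" if "k \<ge> 2" "k \<noteq> n" for k
      using ckm[OF that(1) n(1) that(2)] n(2) by simp
    have "\<forall>a\<in>L1. \<phi> a = phi1 a + a n"
    proof
      fix a assume a: "a \<in> L1"
      show "\<phi> a = phi1 a + a n"
      proof (rule lim[OF a, of "Suc n"])
        fix N assume N: "N \<ge> Suc n"
        have "(\<Sum>k\<in>{1..<N}. a k * c k) = (\<Sum>k\<in>{1,n}. a k * c k)"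
          by (rule sum.mono_neutral_right) (use N n oth in auto)
        also have "\<dots> = a 1 + a n" using n c1 by simp
        finally show "\<phi> a - (phi1 a + a n) = \<phi> (tl N a)"
          using decomp[OF a, of N] N by (simp add: phi1_def)
      qed
    qed
    moreover have "n > 1" using n(1) by simp
    ultimately show ?thesis by blast
  next
    case False
    have "\<forall>a\<in>L1. \<phi> a = phi1 a"
    proof
      fix a assume a: "a \<in> L1"
      show "\<phi> a = phi1 a"
      proof (rule lim[OF a, of 2])
        fix N :: nat assume N: "N \<ge> 2"
        have "(\<Sum>k\<in>{1..<N}. a k * c k) = (\<Sum>k\<in>{1}. a k * c k)"
          by (rule sum.mono_neutral_right) (use N False in auto)
        also have "\<dots> = a 1" using c1 by simp
        finally show "\<phi> a - phi1 a = \<phi> (tl N a)"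
          using decomp[OF a, of N] N by (simp add: phi1_def)
      qed
    qed
    then show ?thesis by blast
  qed
qed

lemma l1mult_at: "l1mult a b 1 = a 1 * b 1" "l1mult a b (Suc 0) = a 1 * b 1" "n > 1 \<Longrightarrow> l1mult a b n = a 1 * b n + b 1 * a n + a n * b n"
  by (auto simp: l1mult_def)

lemma forms_char1:
  assumes "\<forall>a\<in>L1. \<phi> a = phi1 a" shows "is_character \<phi>"
  unfolding is_character_def
proof (intro conjI ballI allI)
  fix a b c assume ab: "a \<in> L1" "b \<in> L1"
  show "\<phi> (l1add a (l1scale c b)) = \<phi> a + c * \<phi> b"
    using assms ab L1_lin[OF ab] by (simp add: phi1_def l1add_def l1scale_def)
next
  fix a b assume ab: "a \<in> L1" "b \<in> L1"
  show "\<phi> (l1mult a b) = \<phi> a * \<phi> b"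
    using assms ab L1_mult[OF ab] by (simp add: phi1_def l1mult_at)
next
  show "\<exists>C. \<forall>a\<in>L1. cmod (\<phi> a) \<le> C * l1norm a"
    by (rule exI[of _ 1]) (use assms coord_le_l1norm in \<open>simp add: phi1_def\<close>)
next
  show "\<exists>a\<in>L1. \<phi> a \<noteq> 0"
    by (rule bexI[of _ "unitvec 1"]) (use assms unitvec_L1[of 1] in \<open>auto simp: phi1_def unitvec_def\<close>)
qed

lemma forms_char2:
  assumes "n > 1" "\<forall>a\<in>L1. \<phi> a = phi1 a + a n" shows "is_character \<phi>"
  unfolding is_character_def
proof (intro conjI ballI allI)
  fix a b c assume ab: "a \<in> L1" "b \<in> L1"
  show "\<phi> (l1add a (l1scale c b)) = \<phi> a + c * \<phi> b"
    using assms ab L1_lin[OF ab] by (simp add: phi1_def l1add_def l1scale_def algebra_simps)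
next
  fix a b assume ab: "a \<in> L1" "b \<in> L1"
  show "\<phi> (l1mult a b) = \<phi> a * \<phi> b"
    using assms ab L1_mult[OF ab] by (simp add: phi1_def l1mult_at algebra_simps)
next
  show "\<exists>C. \<forall>a\<in>L1. cmod (\<phi> a) \<le> C * l1norm a"
  proof (rule exI[of _ 2], intro ballI)
    fix a assume a: "a \<in> L1"
    have "cmod (a 1 + a n) \<le> cmod (a 1) + cmod (a n)" by (rule norm_triangle_ineq)
    also have "\<dots> \<le> 2 * l1norm a" using coord_le_l1norm[OF a, of 1] coord_le_l1norm[OF a, of n] by simp
    finally show "cmod (\<phi> a) \<le> 2 * l1norm a" using assms a by (simp add: phi1_def)
  qed
next
  show "\<exists>a\<in>L1. \<phi> a \<noteq> 0"
    by (rule bexI[of _ "unitvec 1"]) (use assms unitvec_L1[of 1] in \<open>auto simp: phi1_def unitvec_def\<close>)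
qed

lemma char_iff: "is_character \<phi> \<longleftrightarrow>
            ((\<forall>a\<in>L1. \<phi> a = phi1 a) \<or> (\<exists>n>1. \<forall>a\<in>L1. \<phi> a = phi1 a + a n))"
  using char_forms forms_char1 forms_char2 by blast



lemma not_amen: "\<not> left_phi_amenable phi1"
proof
  assume "left_phi_amenable phi1"
  then obtain F C where F: "F \<noteq> bot" and ev: "eventually (\<lambda>x. x \<in> L1 \<and> l1norm x \<le> C) F"
    and lim: "\<forall>a\<in>L1. ((\<lambda>x. l1norm (\<lambda>n. l1mult a x n - phi1 a * x n)) \<longlongrightarrow> 0) F"
    and one: "((\<lambda>x. phi1 x) \<longlongrightarrow> 1) F" by (auto simp: left_phi_amenable_def)
  have ek: "((\<lambda>x. cmod (x 1 + x k)) \<longlongrightarrow> 0) F" if "k \<ge> 2" for k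
  proof -
    have "(\<lambda>n. l1mult (unitvec k) x n - phi1 (unitvec k) * x n) = (\<lambda>n. if n = k then x 1 + x k else 0)" for x
    proof (rule ext)
      fix n show "l1mult (unitvec k) x n - phi1 (unitvec k) * x n = (if n = k then x 1 + x k else 0)"
        using that by (cases "n = 0"; cases "n = 1") (auto simp: l1mult_def unitvec_def phi1_def)
    qed
    moreover have "((\<lambda>x. l1norm (\<lambda>n. l1mult (unitvec k) x n - phi1 (unitvec k) * x n)) \<longlongrightarrow> 0) F"
      using lim unitvec_L1[of k] that by simp
    ultimately show ?thesis by (simp only: l1norm_single)
  qed
  have evk: "eventually (\<lambda>x. cmod (x k) \<ge> 1/2) F" if "k \<ge> 2" for k
  proof -
    have e1: "eventually (\<lambda>x. dist (cmod (x 1 + x k)) 0 < 1/4) F"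
      using ek[OF that] by (simp only: tendsto_iff)
    have e2: "eventually (\<lambda>x. dist (x 1) 1 < 1/4) F"
      using one unfolding phi1_def by (simp only: tendsto_iff)
    show ?thesis
    proof (rule eventually_mono[OF eventually_conj[OF e1 e2]])
      fix x assume h: "dist (cmod (x 1 + x k)) 0 < 1/4 \<and> dist (x 1) 1 < 1/4"
      have a: "cmod (x 1) \<le> cmod (x 1 + x k) + cmod (x k)"
        using norm_triangle_ineq4[of "x 1 + x k" "x k"] by simp
      have b: "1 \<le> cmod (x 1 - 1) + cmod (x 1)"
        using norm_triangle_ineq4[of "x 1" "x 1 - 1"] by simp
      show "cmod (x k) \<ge> 1/2" using a b h by (simp add: dist_norm)
    qed
  qed
  obtain K :: nat where K: "2 * C < real K" using reals_Archimedean2 by blast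
  have eall: "eventually (\<lambda>x. \<forall>k\<in>{2..<K+2}. cmod (x k) \<ge> 1/2) F"
    by (rule eventually_ball_finite) (use evk in auto)
  have "eventually (\<lambda>x. False) F"
  proof (rule eventually_mono[OF eventually_conj[OF ev eall]])
    fix x assume h: "(x \<in> L1 \<and> l1norm x \<le> C) \<and> (\<forall>k\<in>{2..<K+2}. cmod (x k) \<ge> 1/2)"
    have "(\<Sum>k\<in>{2..<K+2}. (1/2::real)) \<le> (\<Sum>k\<in>{2..<K+2}. cmod (x k))"
      using h by (intro sum_mono) auto
    also have "\<dots> \<le> (\<Sum>n. cmod (x n))"
      using h by (intro sum_le_suminf) (auto simp: L1_def)
    finally have "real K / 2 \<le> l1norm x" by (simp add: l1norm_def)
    then show False using h K by simp
  qed
  then show False using F by (simp add: eventually_False)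
qed



lemma infsum_single_pt: "infsum (\<lambda>p. if p = q then c else (0::'b::{comm_monoid_add,t2_space})) UNIV = c"
proof -
  have "infsum (\<lambda>p. if p = q then c else (0::'b)) UNIV = infsum (\<lambda>p. if p = q then c else 0) {q}"
    by (rule infsum_cong_neutral) auto
  then show ?thesis by simp
qed

lemma zeroT_L1T: "(\<lambda>_. 0) \<in> L1T"
  by (simp add: L1T_def)

lemma tnorm_zero: "tnorm (\<lambda>_. 0) = 0"
  by (simp add: tnorm_def)

lemma fin_le_tnorm:
  assumes "u \<in> L1T" "finite T" shows "(\<Sum>p\<in>T. cmod (u p)) \<le> tnorm u"
proof -
  have "infsum (\<lambda>p. cmod (u p)) T \<le> infsum (\<lambda>p. cmod (u p)) UNIV"
    by (rule infsum_mono_neutral) (use assms in \<open>auto simp: L1T_def\<close>)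
  then show ?thesis using assms(2) by (simp add: tnorm_def)
qed

lemma coord_le_tnorm: "u \<in> L1T \<Longrightarrow> cmod (u p) \<le> tnorm u"
  using fin_le_tnorm[of u "{p}"] by simp

definition fS :: "nat set \<Rightarrow> seq2 \<Rightarrow> complex" where
  "fS S = (\<lambda>u. \<Sum>k\<in>S. u (k, 1))"

lemma fS_bound: assumes "u \<in> L1T" "finite S" shows "cmod (fS S u) \<le> tnorm u"
proof -
  have "cmod (fS S u) \<le> (\<Sum>k\<in>S. cmod (u (k, 1)))"
    unfolding fS_def by (rule norm_sum)
  also have "\<dots> = (\<Sum>p\<in>(\<lambda>k. (k, 1)) ` S. cmod (u p))"
    by (subst sum.reindex) (auto simp: inj_on_def)
  also have "\<dots> \<le> tnorm u" using assms by (intro fin_le_tnorm) auto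
  finally show ?thesis .
qed

lemma tnorm_nonneg: "tnorm u \<ge> 0"
  unfolding tnorm_def by (rule infsum_nonneg) simp

lemma fS_dualT: assumes "finite S" shows "fS S \<in> dualT"
  unfolding dualT_def
proof (intro CollectI conjI ballI allI)
  fix u v c
  show "fS S (tadd u (tscale c v)) = fS S u + c * fS S v"
    by (simp add: fS_def tadd_def tscale_def sum.distrib sum_distrib_left)
next
  show "\<exists>C. \<forall>u\<in>L1T. cmod (fS S u) \<le> C * tnorm u"
    by (rule exI[of _ 1]) (use fS_bound assms in simp)
qed

lemma dnorm_fS: assumes "finite S" shows "0 \<le> dnorm (fS S)" "dnorm (fS S) \<le> 1"
proof -
  let ?A = "{cmod (fS S u) | u. u \<in> L1T \<and> tnorm u \<le> 1}"
  have mem: "cmod (fS S (\<lambda>_. 0)) \<in> ?A"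
    by (intro CollectI exI[of _ "\<lambda>_. 0"]) (simp add: zeroT_L1T tnorm_zero)
  have ub: "x \<le> 1" if "x \<in> ?A" for x
  proof -
    from that obtain u where u: "x = cmod (fS S u)" "u \<in> L1T" "tnorm u \<le> 1" by blast
    show ?thesis using fS_bound[OF u(2) assms] u(1,3) by linarith
  qed
  have bdd: "bdd_above ?A" by (rule bdd_aboveI[of _ 1]) (rule ub)
  have z: "cmod (fS S (\<lambda>_. 0)) = 0" by (simp add: fS_def)
  have "cmod (fS S (\<lambda>_. 0)) \<le> Sup ?A" by (rule cSup_upper[OF mem bdd])
  then show "0 \<le> dnorm (fS S)" unfolding dnorm_def z .
  have ne: "?A \<noteq> {}" using mem by blast
  show "dnorm (fS S) \<le> 1" unfolding dnorm_def by (rule cSup_least[OF ne ub])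
qed

lemma phi1_piA: "phi1 (piA u) = u (1, 1)"
proof -
  have "(\<lambda>(i, j). u (i, j) * l1mult (unitvec i) (unitvec j) 1) = (\<lambda>p. if p = (1,1) then u (1,1) else 0)"
    by (auto simp: fun_eq_iff l1mult_def unitvec_def)
  then show ?thesis by (simp add: phi1_def piA_def infsum_single_pt)
qed

lemma not_biflat: "\<not> phi_biflat phi1"
proof
  assume "phi_biflat phi1"
  then obtain \<rho> C where
    lin: "\<forall>a\<in>L1. \<forall>b\<in>L1. \<forall>c. \<forall>f\<in>dualT. \<rho> (l1add a (l1scale c b)) f = \<rho> a f + c * \<rho> b f"
    and bidual: "\<forall>a\<in>L1. \<rho> a \<in> bidualT"
    and bnd: "\<forall>a\<in>L1. \<forall>f\<in>dualT. cmod (\<rho> a f) \<le> C * l1norm a * dnorm f"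
    and ml: "\<forall>a\<in>L1. \<forall>b\<in>L1. \<forall>f\<in>dualT. \<rho> (l1mult a b) f = \<rho> b (\<lambda>u. f (lmod a u))"
    and mr: "\<forall>a\<in>L1. \<forall>b\<in>L1. \<forall>f\<in>dualT. \<rho> (l1mult a b) f = \<rho> a (\<lambda>u. f (rmod u b))"
    and pp: "\<forall>a\<in>L1. \<rho> a (\<lambda>u. phi1 (piA u)) = phi1 a"
    unfolding phi_biflat_def by blast
  define e1 where "e1 = unitvec 1"
  have e1L: "e1 \<in> L1" unfolding e1_def by (rule unitvec_L1) simp
  define m where "m = \<rho> e1"
  have mlin: "m (dadd f (dscale 1 g)) = m f + m g" if "f \<in> dualT" "g \<in> dualT" for f g
    using bidual e1L that unfolding m_def bidualT_def by auto
  have split: "fS (insert k S) = dadd (fS S) (dscale 1 (fS {k}))" if "finite S" "k \<notin> S" for k S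
    using that by (simp add: fS_def dadd_def dscale_def fun_eq_iff)
  have m0: "m (fS {}) = 0"
  proof -
    have eq: "fS {} = dadd (fS {}) (dscale 1 (fS {}))" by (simp add: fS_def dadd_def dscale_def fun_eq_iff)
    have "m (dadd (fS {}) (dscale 1 (fS {}))) = m (fS {}) + m (fS {})"
      using mlin fS_dualT[of "{}"] by simp
    then have "m (fS {}) = m (fS {}) + m (fS {})" by (simp only: eq[symmetric])
    then show ?thesis by simp
  qed
  have m1: "m (fS {1}) = 1"
  proof -
    have "fS {1} = (\<lambda>u. phi1 (piA u))" by (simp add: fS_def phi1_piA fun_eq_iff)
    then show ?thesis using pp e1L by (simp add: m_def e1_def phi1_def unitvec_def)
  qed
  have mk: "m (fS {k}) = -1" if "k \<ge> 2" for k
  proof -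
    have ekL: "unitvec k \<in> L1" using that by (intro unitvec_L1) simp
    have d: "fS {1, k} \<in> dualT" by (rule fS_dualT) simp
    have a1: "l1mult (unitvec k) e1 = unitvec k" unfolding e1_def
      by (rule unit_right) (use that in \<open>simp add: unitvec_def\<close>)
    have a2: "l1mult e1 (unitvec k) = unitvec k" unfolding e1_def
      by (rule unit_left) (use that in \<open>simp add: unitvec_def\<close>)
    have dk: "fS {k} \<in> dualT" by (rule fS_dualT) simp
    have "\<rho> (l1mult (unitvec k) e1) (fS {k}) = m (\<lambda>u. fS {k} (lmod (unitvec k) u))"
      using ml ekL e1L dk unfolding m_def by blast
    then have "\<rho> (unitvec k) (fS {k}) = m (\<lambda>u. fS {k} (lmod (unitvec k) u))"
      by (simp only: a1)
    also have "(\<lambda>u. fS {k} (lmod (unitvec k) u)) = fS {1, k}"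
    proof (rule ext)
      fix u
      have k: "k \<noteq> 0" "k \<noteq> 1" using that by auto
      have "fS {k} (lmod (unitvec k) u) = l1mult (unitvec k) (\<lambda>i. u (i, 1)) k"
        by (simp add: fS_def lmod_def)
      also have "\<dots> = u (1, 1) + u (k, 1)" using k by (simp add: l1mult_def unitvec_def)
      also have "\<dots> = fS {1, k} u" using k by (simp add: fS_def)
      finally show "fS {k} (lmod (unitvec k) u) = fS {1, k} u" .
    qed
    finally have r1: "\<rho> (unitvec k) (fS {k}) = m (fS {1, k})" .
    have "\<rho> (l1mult e1 (unitvec k)) (fS {k}) = m (\<lambda>u. fS {k} (rmod u (unitvec k)))"
      using mr ekL e1L dk unfolding m_def by blast
    then have "\<rho> (unitvec k) (fS {k}) = m (\<lambda>u. fS {k} (rmod u (unitvec k)))"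
      by (simp only: a2)
    also have "(\<lambda>u. fS {k} (rmod u (unitvec k))) = fS {}"
    proof (rule ext)
      fix u
      have k: "k \<noteq> 0" "k \<noteq> 1" using that by auto
      have "fS {k} (rmod u (unitvec k)) = l1mult (\<lambda>j. u (k, j)) (unitvec k) 1"
        by (simp add: fS_def rmod_def)
      also have "\<dots> = 0" using k by (simp add: l1mult_def unitvec_def)
      finally show "fS {k} (rmod u (unitvec k)) = fS {} u" by (simp add: fS_def)
    qed
    finally have r2: "\<rho> (unitvec k) (fS {k}) = 0" using m0 by simp
    have "fS {1, k} = dadd (fS {1}) (dscale 1 (fS {k}))"
      using split[of "{1}" k] that by (simp add: insert_commute)
    then have "m (fS {1, k}) = m (fS {1}) + m (fS {k})"
      using mlin fS_dualT[of "{1}"] fS_dualT[of "{k}"] by simp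
    then have "1 + m (fS {k}) = 0" using r1 r2 m1 by simp
    then show ?thesis by (simp add: add_eq_0_iff)
  qed
  have mS: "finite S \<Longrightarrow> S \<subseteq> {2..} \<Longrightarrow> m (fS S) = - of_nat (card S)" for S
  proof (induction S rule: finite_induct)
    case empty then show ?case using m0 by simp
  next
    case (insert k S)
    then have "m (fS (insert k S)) = m (fS S) + m (fS {k})"
      using split[of S k] mlin fS_dualT[of S] fS_dualT[of "{k}"] by simp
    then show ?case using insert mk[of k] by simp
  qed
  obtain K :: nat where K: "\<bar>C\<bar> < real K" using reals_Archimedean2 by blast
  let ?S = "{2..<K+2}"
  have sub: "?S \<subseteq> {2..}" by auto
  have "m (fS ?S) = - of_nat K" using mS[OF _ sub] by simp
  then have v: "cmod (m (fS ?S)) = real K" by simp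
  have dS: "fS ?S \<in> dualT" by (rule fS_dualT) simp
  have b: "cmod (m (fS ?S)) \<le> C * l1norm e1 * dnorm (fS ?S)"
    using bnd e1L dS unfolding m_def by blast
  have n1: "l1norm e1 = 1" unfolding e1_def unitvec_def using l1norm_single[of 1 1] by simp
  have d0: "0 \<le> dnorm (fS ?S)" and d1: "dnorm (fS ?S) \<le> 1" using dnorm_fS[of ?S] by auto
  have "C * dnorm (fS ?S) \<le> \<bar>C\<bar> * dnorm (fS ?S)" using d0 by (intro mult_right_mono) auto
  also have "\<dots> \<le> \<bar>C\<bar>" using d0 d1 by (simp add: mult_left_le)
  finally have "C * dnorm (fS ?S) \<le> \<bar>C\<bar>" .
  then show False using K v b n1 by simp
qed



lemma col_T:
  assumes "\<And>i j. u (i, j) = (if j = 1 then v i else 0)" "summable (\<lambda>i. cmod (v i))"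
  shows "(\<lambda>p. cmod (u p)) summable_on UNIV" "tnorm u = (\<Sum>i. cmod (v i))"
proof -
  let ?h = "\<lambda>i::nat. (i, 1::nat)"
  let ?g = "\<lambda>p. cmod (u p)"
  have inj: "inj_on ?h UNIV" by (auto simp: inj_on_def)
  have gh: "?g \<circ> ?h = (\<lambda>i. cmod (v i))" using assms(1) by (simp add: fun_eq_iff)
  have s1: "(\<lambda>i. cmod (v i)) summable_on UNIV"
    by (rule norm_summable_imp_summable_on) (use assms(2) in simp)
  have s2: "?g summable_on range ?h"
    using summable_on_reindex[OF inj, of ?g] gh s1 by simp
  have z: "?g p = 0" if "p \<notin> range ?h" for p
  proof -
    obtain i j where p: "p = (i, j)" by (cases p)
    with that have "j \<noteq> 1" by auto
    then show ?thesis using assms(1) p by simp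
  qed
  have eqs: "?g summable_on UNIV \<longleftrightarrow> ?g summable_on range ?h"
    by (rule summable_on_cong_neutral) (use z in auto)
  show "?g summable_on UNIV" using eqs s2 by simp
  have "infsum ?g UNIV = infsum ?g (range ?h)"
    by (rule infsum_cong_neutral) (use z in auto)
  also have "\<dots> = infsum (\<lambda>i. cmod (v i)) UNIV"
    using infsum_reindex[OF inj, of ?g] gh by simp
  also have "\<dots> = (\<Sum>i. cmod (v i))"
    by (rule infsum_nat_nonneg) (use assms(2) in auto)
  finally show "tnorm u = (\<Sum>i. cmod (v i))" by (simp add: tnorm_def)
qed

lemma single_T:
  assumes "fst q \<noteq> 0" "snd q \<noteq> 0"
  shows "(\<lambda>p. if p = q then c else 0) \<in> L1T" "tnorm (\<lambda>p. if p = q then c else 0) = cmod c"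
proof -
  have e: "(\<lambda>p. cmod (if p = q then c else 0)) = (\<lambda>p. if p = q then cmod c else 0)"
    by (simp add: fun_eq_iff)
  have "(\<lambda>p. if p = q then cmod c else 0) summable_on UNIV \<longleftrightarrow> (\<lambda>p. if p = q then cmod c else 0) summable_on {q}"
    by (rule summable_on_cong_neutral) auto
  then have "(\<lambda>p. if p = q then cmod c else 0) summable_on UNIV" by simp
  then show "(\<lambda>p. if p = q then c else 0) \<in> L1T" using assms e
    by (auto simp: L1T_def)
  show "tnorm (\<lambda>p. if p = q then c else 0) = cmod c"
    unfolding tnorm_def e by (rule infsum_single_pt)
qed

lemma tendsto_principal_single: "f r = (l::'b::topological_space) \<Longrightarrow> (f \<longlongrightarrow> l) (principal {r})"
  by (auto simp: tendsto_def eventually_principal)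

lemma unitvec_mult_1: "l1mult (unitvec i) (unitvec 1) m = (if m = 0 then 0 else unitvec i m)"
  by (auto simp: l1mult_def unitvec_def)

definition pp :: "nat \<Rightarrow> nat \<Rightarrow> complex" where
  "pp N i = (if i = 1 then 1 else if 2 \<le> i \<and> i < N + 2 then -1 else 0)"

definition RR :: "nat \<Rightarrow> seq \<Rightarrow> seq2" where
  "RR N x = (\<lambda>(i, j). if j = 1 then x 1 * pp N i else 0)"

lemma pp_summable: "summable (\<lambda>i. cmod (c * pp N i))"
  by (rule summable_finite[of "{..<N+2}"]) (auto simp: pp_def)

lemma RR_col: "RR N x (i, j) = (if j = 1 then x 1 * pp N i else 0)"
  by (simp add: RR_def)

lemma RR_L1T: "RR N x \<in> L1T"
proof -
  have "(\<lambda>p. cmod (RR N x p)) summable_on UNIV"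
    by (rule col_T(1)[OF RR_col pp_summable])
  moreover have "RR N x (i, j) = 0" if "i = 0 \<or> j = 0" for i j
    using that by (auto simp: RR_def pp_def)
  ultimately show ?thesis by (simp add: L1T_def)
qed

lemma RR_tnorm: "tnorm (RR N x) = cmod (x 1) * (\<Sum>i. cmod (pp N i))"
proof -
  have "tnorm (RR N x) = (\<Sum>i. cmod (x 1 * pp N i))"
    by (rule col_T(2)[OF RR_col pp_summable])
  also have "\<dots> = (\<Sum>i. cmod (x 1) * cmod (pp N i))" by (simp add: norm_mult)
  also have "\<dots> = cmod (x 1) * (\<Sum>i. cmod (pp N i))"
    by (rule suminf_mult) (use pp_summable[of 1 N] in simp)
  finally show ?thesis .
qed

lemma RR_bl: "bounded_linear_to_T (RR N)"
  unfolding bounded_linear_to_T_def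
proof (intro conjI ballI allI)
  fix a show "RR N a \<in> L1T" by (rule RR_L1T)
next
  fix a b c
  show "RR N (l1add a (l1scale c b)) = tadd (RR N a) (tscale c (RR N b))"
    by (auto simp: fun_eq_iff RR_def tadd_def tscale_def l1add_def l1scale_def algebra_simps)
next
  let ?P = "(\<Sum>i. cmod (pp N i))"
  have P0: "0 \<le> ?P" using pp_summable[of 1 N] by (intro suminf_nonneg) auto
  show "\<exists>C. \<forall>a\<in>L1. tnorm (RR N a) \<le> C * l1norm a"
  proof (rule exI[of _ ?P], intro ballI)
    fix a assume a: "a \<in> L1"
    have "cmod (a 1) * ?P \<le> l1norm a * ?P"
      using coord_le_l1norm[OF a, of 1] P0 by (rule mult_right_mono)
    then show "tnorm (RR N a) \<le> ?P * l1norm a" by (simp add: RR_tnorm mult.commute)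
  qed
qed

lemma RR_piA: "piA (RR N x) = (\<lambda>m. x 1 * pp N m)"
proof (rule ext)
  fix m
  have "(\<lambda>(i, j). RR N x (i, j) * l1mult (unitvec i) (unitvec j) m) = (\<lambda>q. if q = (m, 1) then x 1 * pp N m else 0)"
  proof (rule ext)
    fix q :: "nat \<times> nat"
    obtain i j where q: "q = (i, j)" by (cases q)
    show "(\<lambda>(i, j). RR N x (i, j) * l1mult (unitvec i) (unitvec j) m) q = (if q = (m, 1) then x 1 * pp N m else 0)"
    proof (cases "j = 1")
      case True
      have "l1mult (unitvec i) (unitvec j) m = (if m = 0 then 0 else unitvec i m)"
        using True unitvec_mult_1 by simp
      then show ?thesis using q True by (auto simp: RR_def pp_def unitvec_def)
    next
      case False
      then show ?thesis using q by (simp add: RR_def)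
    qed
  qed
  then show "piA (RR N x) m = x 1 * pp N m" by (simp add: piA_def infsum_single_pt)
qed

lemma pp_L1: "(\<lambda>m. c * pp N m) \<in> L1"
  using pp_summable[of c N] by (simp add: L1_def pp_def)

lemma lmod_RR: assumes "a 0 = 0"
  shows "(\<lambda>p. lmod a (RR N x) p - RR N (l1mult a x) p) =
     (\<lambda>(i, j). if j = 1 then x 1 * (if N + 2 \<le> i then a i else 0) else 0)"
proof (rule ext)
  fix q :: "nat \<times> nat"
  obtain i j where q: "q = (i, j)" by (cases q)
  have "lmod a (RR N x) (i, j) - RR N (l1mult a x) (i, j) = (if j = 1 then x 1 * (if N + 2 \<le> i then a i else 0) else 0)"
  proof (cases "j = 1")
    case False
    then show ?thesis by (simp add: lmod_def RR_def l1mult_def)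
  next
    case True
    have "lmod a (RR N x) (i, j) = l1mult a (\<lambda>k. x 1 * pp N k) i"
      using True by (simp add: lmod_def RR_def)
    moreover consider "i = 0" | "i = 1" | "2 \<le> i" "i < N + 2" | "N + 2 \<le> i" by linarith
    ultimately show ?thesis using True assms
      by cases (auto simp: RR_def l1mult_def pp_def algebra_simps)
  qed
  then show "lmod a (RR N x) q - RR N (l1mult a x) q = (\<lambda>(i, j). if j = 1 then x 1 * (if N + 2 \<le> i then a i else 0) else 0) q"
    using q by simp
qed

lemma biproj_phi1:
  assumes phi: "\<forall>a\<in>L1. \<phi> a = phi1 a"
  shows "approx_left_phi_biprojective \<phi>"
  unfolding approx_left_phi_biprojective_def
proof (intro exI[of _ "filtermap RR sequentially"] conjI ballI)
  show "filtermap RR sequentially \<noteq> bot" by (simp add: filtermap_bot_iff)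
  show "eventually bounded_linear_to_T (filtermap RR sequentially)"
    by (simp add: eventually_filtermap RR_bl)
  fix a x assume a: "a \<in> L1" and x: "x \<in> L1"
  have a0: "a 0 = 0" using a by (simp add: L1_def)
  have T: "tnorm (\<lambda>p. lmod a (RR N x) p - RR N (l1mult a x) p) = cmod (x 1) * l1norm (\<lambda>i. if N + 2 \<le> i then a i else 0)" for N
  proof -
    have S: "summable (\<lambda>i. cmod (x 1 * (if N + 2 \<le> i then a i else 0)))"
      using tl_L1[OF a, of "N+2"] by (simp add: L1_def norm_mult summable_mult)
    have "tnorm (\<lambda>p. lmod a (RR N x) p - RR N (l1mult a x) p) = (\<Sum>i. cmod (x 1 * (if N + 2 \<le> i then a i else 0)))"
      by (rule col_T(2)[OF _ S]) (use fun_cong[OF lmod_RR[of a N x, OF a0]] in simp)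
    also have "\<dots> = (\<Sum>i. cmod (x 1) * cmod (if N + 2 \<le> i then a i else 0))" by (simp add: norm_mult)
    also have "\<dots> = cmod (x 1) * l1norm (\<lambda>i. if N + 2 \<le> i then a i else 0)"
      unfolding l1norm_def
      by (rule suminf_mult) (use tl_L1[OF a, of "N+2"] in \<open>simp add: L1_def\<close>)
    finally show ?thesis .
  qed
  have L: "(\<lambda>N. l1norm (\<lambda>i. if N + 2 \<le> i then a i else 0)) \<longlonglongrightarrow> 0"
    using LIMSEQ_ignore_initial_segment[OF tl_norm_tendsto[OF a], of 2] by simp
  have "(\<lambda>N. cmod (x 1) * l1norm (\<lambda>i. if N + 2 \<le> i then a i else 0)) \<longlonglongrightarrow> cmod (x 1) * 0"
    by (intro tendsto_mult tendsto_const L)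
  then show "((\<lambda>r. tnorm (\<lambda>p. lmod a (r x) p - r (l1mult a x) p)) \<longlongrightarrow> 0) (filtermap RR sequentially)"
    by (simp add: filterlim_filtermap T)
  have xa: "l1mult x a \<in> L1" by (rule L1_mult[OF x a])
  have Z: "(\<lambda>p. RR N (l1mult x a) p - \<phi> a * RR N x p) = (\<lambda>_. 0)" for N
    using phi a by (auto simp: fun_eq_iff RR_def l1mult_def phi1_def)
  show "((\<lambda>r. tnorm (\<lambda>p. r (l1mult x a) p - \<phi> a * r x p)) \<longlongrightarrow> 0) (filtermap RR sequentially)"
    by (simp add: filterlim_filtermap Z tnorm_zero)
  have P: "\<phi> (piA (RR N x)) - \<phi> x = 0" for N
    using phi x pp_L1[of "x 1" N] by (simp add: RR_piA phi1_def pp_def)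
  show "((\<lambda>r. \<phi> (piA (r x)) - \<phi> x) \<longlongrightarrow> 0) (filtermap RR sequentially)"
    by (simp add: filterlim_filtermap P)
qed



definition RS :: "nat \<Rightarrow> seq \<Rightarrow> seq2" where
  "RS n x = (\<lambda>q. if q = (n, n) then x 1 + x n else 0)"

lemma RS_piA: assumes "n > 1" shows "piA (RS n x) = (\<lambda>m. (x 1 + x n) * unitvec n m)"
proof (rule ext)
  fix m
  have "(\<lambda>(i, j). RS n x (i, j) * l1mult (unitvec i) (unitvec j) m) =
        (\<lambda>q. if q = (n, n) then (x 1 + x n) * unitvec n m else 0)"
    using assms by (auto simp: fun_eq_iff RS_def l1mult_def unitvec_def)
  then show "piA (RS n x) m = (x 1 + x n) * unitvec n m" by (simp add: piA_def infsum_single_pt)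
qed

lemma biproj_n:
  assumes n: "n > 1" and phi: "\<forall>a\<in>L1. \<phi> a = phi1 a + a n"
  shows "approx_left_phi_biprojective \<phi>"
  unfolding approx_left_phi_biprojective_def
proof (intro exI[of _ "principal {RS n}"] conjI ballI)
  show "principal {RS n} \<noteq> bot" by (simp add: principal_eq_bot_iff)
  have q: "fst (n, n) \<noteq> 0" "snd (n, n) \<noteq> 0" using n by auto
  have bl: "bounded_linear_to_T (RS n)"
    unfolding bounded_linear_to_T_def
  proof (intro conjI ballI allI)
    fix a show "RS n a \<in> L1T" unfolding RS_def by (rule single_T(1)[OF q])
  next
    fix a b c
    show "RS n (l1add a (l1scale c b)) = tadd (RS n a) (tscale c (RS n b))"
      by (auto simp: fun_eq_iff RS_def tadd_def tscale_def l1add_def l1scale_def algebra_simps)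
  next
    show "\<exists>C. \<forall>a\<in>L1. tnorm (RS n a) \<le> C * l1norm a"
    proof (rule exI[of _ 2], intro ballI)
      fix a assume a: "a \<in> L1"
      have "tnorm (RS n a) = cmod (a 1 + a n)" unfolding RS_def by (rule single_T(2)[OF q])
      also have "\<dots> \<le> cmod (a 1) + cmod (a n)" by (rule norm_triangle_ineq)
      also have "\<dots> \<le> 2 * l1norm a" using coord_le_l1norm[OF a, of 1] coord_le_l1norm[OF a, of n] by simp
      finally show "tnorm (RS n a) \<le> 2 * l1norm a" .
    qed
  qed
  then show "eventually bounded_linear_to_T (principal {RS n})" by (simp add: eventually_principal)
  fix a x assume a: "a \<in> L1" and x: "x \<in> L1"
  have a0: "a 0 = 0" and x0: "x 0 = 0" using a x by (auto simp: L1_def)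
  have n1: "n \<noteq> 1" "n \<noteq> 0" using n by auto
  have Z1: "(\<lambda>p. lmod a (RS n x) p - RS n (l1mult a x) p) = (\<lambda>_. 0)"
  proof (rule ext)
    fix q :: "nat \<times> nat"
    obtain i j where q: "q = (i, j)" by (cases q)
    consider "i = 0" | "i = 1" | "i > 1" by linarith
    then have "lmod a (RS n x) (i, j) - RS n (l1mult a x) (i, j) = 0"
      by cases (use n1 in \<open>auto simp: lmod_def RS_def l1mult_def algebra_simps\<close>)
    then show "lmod a (RS n x) q - RS n (l1mult a x) q = 0" using q by simp
  qed
  show "((\<lambda>r. tnorm (\<lambda>p. lmod a (r x) p - r (l1mult a x) p)) \<longlongrightarrow> 0) (principal {RS n})"
    by (rule tendsto_principal_single) (simp add: Z1 tnorm_zero)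
  have Z2: "(\<lambda>p. RS n (l1mult x a) p - \<phi> a * RS n x p) = (\<lambda>_. 0)"
    using phi a n1 by (auto simp: fun_eq_iff RS_def l1mult_def phi1_def algebra_simps)
  show "((\<lambda>r. tnorm (\<lambda>p. r (l1mult x a) p - \<phi> a * r x p)) \<longlongrightarrow> 0) (principal {RS n})"
    by (rule tendsto_principal_single) (simp add: Z2 tnorm_zero)
  have L: "(\<lambda>m. (x 1 + x n) * unitvec n m) \<in> L1"
    unfolding L1_def using n1 by (auto simp: unitvec_def intro!: summable_finite[of "{n}"] split: if_splits)
  have "\<phi> (piA (RS n x)) - \<phi> x = 0"
    using phi x L n1 by (simp add: RS_piA[OF n] phi1_def unitvec_def)
  then show "((\<lambda>r. \<phi> (piA (r x)) - \<phi> x) \<longlongrightarrow> 0) (principal {RS n})"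
    by (intro tendsto_principal_single)
qed

lemma biproj_all: "approx_left_character_biprojective"
  unfolding approx_left_character_biprojective_def
  using char_forms biproj_phi1 biproj_n by blast


theorem mainTheorem19:
  shows "(\<forall>\<phi>. is_character \<phi> \<longleftrightarrow>
            ((\<forall>a\<in>L1. \<phi> a = phi1 a) \<or> (\<exists>n>1. \<forall>a\<in>L1. \<phi> a = phi1 a + a n))) \<and>
         \<not> left_phi_amenable phi1 \<and>
         \<not> phi_biflat phi1 \<and>
         approx_left_character_biprojective"
  using char_iff not_amen not_biflat biproj_all by blast

end
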